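(* Let $q\ge5$, let $\ell$ be an $E_{n\Gamma}$-line and, when $q\not\equiv0\pmod3$, let $\widetilde\ell=\ell\mathfrak A$. Then $\ell=\widetilde\ell\mathfrak A$ and $\Pi_{\overline{1_{\mathcal C}}}(\ell)+2\Pi_{2_{\mathcal C}}(\ell)+3\Pi_{3_{\mathcal C}}(\ell)=q+1$ for all $q$; and, for $q\not\equiv0\pmod3$, $\Pi_{\overline{1_{\mathcal C}}}(\widetilde\ell)+2\Pi_{2_{\mathcal C}}(\widetilde\ell)+3\Pi_{3_{\mathcal C}}(\widetilde\ell)=q+1$, $P_{1_\Gamma}(\ell)+2P_T(\ell)+3P_{3_\Gamma}(\ell)=q+1$, and $P_{1_\Gamma}(\widetilde\ell)+2P_T(\widetilde\ell)+3P_{3_\Gamma}(\widetilde\ell)=q+1$.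
   Context: Let $\mathbb F_q$ be the field of order $q$ and $\mathrm{PG}(3,q)$ the projective space with points $\mathbf P(x_0,x_1,x_2,x_3)$. For $t\in\mathbb F_q$ put $P(t)=\mathbf P(t^3,t^2,t,1)$, and $P(\infty)=\mathbf P(1,0,0,0)$; the twisted cubic is $\mathcal C=\{P(t):t\in\mathbb F_q\cup\{\infty\}\}$. Write $\boldsymbol\pi(c_0,c_1,c_2,c_3)$ for the plane $c_0x_0+c_1x_1+c_2x_2+c_3x_3=0$. The osculating plane at $P(t)$ is $\boldsymbol\pi(1,-3t,3t^2,-t^3)$ ($t\in\mathbb F_q$) and $\boldsymbol\pi(0,0,0,1)$ at $P(\infty)$; these are the $\Gamma$-planes. The tangent at $P(t)$, $t\in\mathbb F_q$, is the line through $P(t)$ and $\mathbf P(3t^2,2t,1,0)$; at $P(\infty)$ it is the line through $\mathbf P(1,0,0,0),\mathbf P(0,1,0,0)$. A real chord joins two distinct points of $\mathcal C$; an imaginary chord joins $P(\tau),P(\tau^q)$, $\tau\in\mathbb F_{q^2}\setminus\mathbb F_q$; chords are real chords, tangents and imaginary chords. An axis is the intersection of two distinct osculating planes at points of $\mathcal C$, or of the osculating planes at conjugate points $P(\tau),P(\tau^q)$. An $E_{n\Gamma}$-line is a line with no point of $\mathcal C$, not contained in a $\Gamma$-plane, which is neither a chord nor an axis. For $q\not\equiv 0\pmod 3$, the null polarity $\mathfrak A$ maps the point $\mathbf P(x_0,x_1,x_2,x_3)$ to the plane $\boldsymbol\pi(x_3,-3x_2,3x_1,-x_0)$, and for a line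 $\ell=\overline{P_1P_2}$ one sets $\ell\mathfrak A=P_1\mathfrak A\cap P_2\mathfrak A$ (a line), and dually a line which is the intersection of two planes is mapped to the line joining their images. Plane types: a $d_{\mathcal C}$-plane ($d\in\{2,3\}$) contains exactly $d$ points of $\mathcal C$; a $\overline{1_{\mathcal C}}$-plane is a non-$\Gamma$-plane containing exactly one point of $\mathcal C$. Point types for $q\not\equiv0\pmod3$: $T$-points: points off $\mathcal C$ on a tangent; $\mu_\Gamma$-points ($\mu\in\{1,3\}$): points off $\mathcal C$ lying in exactly $\mu$ distinct $\Gamma$-planes. For a line $m$, $\Pi_\pi(m)$ denotes the number of $\pi$-planes through $m$ and $P_{\mathfrak p}(m)$ the number of $\mathfrak p$-points on $m$. *)

theory Defs
  imports Main
begin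

type_synonym 'a v4 = "'a \<times> 'a \<times> 'a \<times> 'a"

definition zero4 :: "'a::field v4" where
  "zero4 = (0, 0, 0, 0)"

definition smul :: "'a::field \<Rightarrow> 'a v4 \<Rightarrow> 'a v4" where
  "smul k v = (case v of (a, b, c, d) \<Rightarrow> (k * a, k * b, k * c, k * d))"

definition vadd :: "'a::field v4 \<Rightarrow> 'a v4 \<Rightarrow> 'a v4" where
  "vadd v w = (case v of (a, b, c, d) \<Rightarrow> case w of (a', b', c', d') \<Rightarrow>
                 (a + a', b + b', c + c', d + d'))"

definition dot :: "'a::field v4 \<Rightarrow> 'a v4 \<Rightarrow> 'a" where
  "dot c v = (case c of (c0, c1, c2, c3) \<Rightarrow> case v of (x0, x1, x2, x3) \<Rightarrow>
                 c0 * x0 + c1 * x1 + c2 * x2 + c3 * x3)"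

text \<open>A point is the class of nonzero multiples of a nonzero vector; lines and planes
  are sets of points.\<close>

definition pt :: "'a::field v4 \<Rightarrow> 'a v4 set" where
  "pt v = {w. \<exists>k. k \<noteq> 0 \<and> w = smul k v}"

definition Points :: "'a::field v4 set set" where
  "Points = {pt v | v. v \<noteq> zero4}"

definition planeset :: "'a::field v4 \<Rightarrow> 'a v4 set set" where
  "planeset c = {pt v | v. v \<noteq> zero4 \<and> dot c v = 0}"

definition Planes :: "'a::field v4 set set set" where
  "Planes = {planeset c | c. c \<noteq> zero4}"

definition indep :: "'a::field v4 \<Rightarrow> 'a v4 \<Rightarrow> bool" where
  "indep u v = (\<forall>a b. vadd (smul a u) (smul b v) = zero4 \<longrightarrow> a = 0 \<and> b = 0)"

definition lineset :: "'a::field v4 \<Rightarrow> 'a v4 \<Rightarrow> 'a v4 set set" where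
  "lineset u v = {pt (vadd (smul a u) (smul b v)) | a b. vadd (smul a u) (smul b v) \<noteq> zero4}"

definition Lines :: "'a::field v4 set set set" where
  "Lines = {lineset u v | u v. indep u v}"

section \<open>The twisted cubic; parameter None stands for \<infinity>\<close>

definition cvec :: "'a::field option \<Rightarrow> 'a v4" where
  "cvec s = (case s of None \<Rightarrow> (1, 0, 0, 0) | Some t \<Rightarrow> (t ^ 3, t ^ 2, t, 1))"

definition cpt :: "'a::field option \<Rightarrow> 'a v4 set" where
  "cpt s = pt (cvec s)"

definition Curve :: "'a::field v4 set set" where
  "Curve = range cpt"

definition oscp :: "'a::field option \<Rightarrow> 'a v4 set set" where
  "oscp s = (case s of None \<Rightarrow> planeset (0, 0, 0, 1)
                     | Some t \<Rightarrow> planeset (1, - 3 * t, 3 * t ^ 2, - (t ^ 3)))"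

definition GammaPlanes :: "'a::field v4 set set set" where
  "GammaPlanes = range oscp"

definition tanp :: "'a::field option \<Rightarrow> 'a v4 set set" where
  "tanp s = (case s of None \<Rightarrow> lineset (1, 0, 0, 0) (0, 1, 0, 0)
                     | Some t \<Rightarrow> lineset (t ^ 3, t ^ 2, t, 1) (3 * t ^ 2, 2 * t, 1, 0))"

definition Tangents :: "'a::field v4 set set set" where
  "Tangents = range tanp"

definition RealChords :: "'a::field v4 set set set" where
  "RealChords = {l \<in> Lines. \<exists>P Q. P \<in> Curve \<and> Q \<in> Curve \<and> P \<noteq> Q \<and> P \<in> l \<and> Q \<in> l}"

definition RealAxes :: "'a::field v4 set set set" where
  "RealAxes = {oscp s \<inter> oscp t | s t. s \<noteq> t}"

section \<open>The quadratic extension F_{q^2} (given by a field embedding emb of F_q into it)\<close>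

definition is_field_emb :: "('a::field \<Rightarrow> 'b::field) \<Rightarrow> bool" where
  "is_field_emb emb = ((\<forall>x y. emb (x + y) = emb x + emb y) \<and>
                       (\<forall>x y. emb (x * y) = emb x * emb y) \<and> emb 1 = 1)"

definition embv :: "('a::field \<Rightarrow> 'b::field) \<Rightarrow> 'a v4 \<Rightarrow> 'b v4" where
  "embv emb v = (case v of (a, b, c, d) \<Rightarrow> (emb a, emb b, emb c, emb d))"

definition ratpts :: "('a::field \<Rightarrow> 'b::field) \<Rightarrow> 'b v4 set \<Rightarrow> 'a v4 set set" where
  "ratpts emb S = {pt v | v. v \<noteq> zero4 \<and> embv emb v \<in> S}"

definition kspan :: "'b::field v4 \<Rightarrow> 'b v4 \<Rightarrow> 'b v4 set" where
  "kspan u w = {vadd (smul a u) (smul b w) | a b. True}"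

text \<open>Imaginary chord: the line joining P(\<tau>), P(\<tau>^q), \<tau> \<in> F_{q^2} \<setminus> F_q.\<close>
definition ImagChords :: "('a::{field,finite} \<Rightarrow> 'b::field) \<Rightarrow> 'a v4 set set set" where
  "ImagChords emb = {ratpts emb (kspan (cvec (Some \<tau>)) (cvec (Some (\<tau> ^ card (UNIV :: 'a set))))) | \<tau>.
                        \<tau> \<notin> range emb}"

definition oscvec :: "'b::field \<Rightarrow> 'b v4" where
  "oscvec t = (1, - 3 * t, 3 * t ^ 2, - (t ^ 3))"

text \<open>Imaginary axis: intersection of the osculating planes at P(\<tau>), P(\<tau>^q).\<close>
definition ImagAxes :: "('a::{field,finite} \<Rightarrow> 'b::field) \<Rightarrow> 'a v4 set set set" where
  "ImagAxes emb = {ratpts emb {w. dot (oscvec \<tau>) w = 0 \<and> dot (oscvec (\<tau> ^ card (UNIV :: 'a set))) w = 0} | \<tau>.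
                        \<tau> \<notin> range emb}"

definition Chords :: "('a::{field,finite} \<Rightarrow> 'b::field) \<Rightarrow> 'a v4 set set set" where
  "Chords emb = RealChords \<union> Tangents \<union> ImagChords emb"

definition Axes :: "('a::{field,finite} \<Rightarrow> 'b::field) \<Rightarrow> 'a v4 set set set" where
  "Axes emb = RealAxes \<union> ImagAxes emb"

definition EnGammaLines :: "('a::{field,finite} \<Rightarrow> 'b::field) \<Rightarrow> 'a v4 set set set" where
  "EnGammaLines emb = {l \<in> Lines. l \<inter> Curve = {} \<and> (\<forall>\<pi>\<in>GammaPlanes. \<not> l \<subseteq> \<pi>)
                         \<and> l \<notin> Chords emb \<and> l \<notin> Axes emb}"

section \<open>Null polarity (used for q not divisible by 3)\<close>

definition polarv :: "'a::field v4 \<Rightarrow> 'a v4 set set" where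
  "polarv v = (case v of (x0, x1, x2, x3) \<Rightarrow> planeset (x3, - 3 * x2, 3 * x1, - x0))"

definition polar_line :: "'a::field v4 set set \<Rightarrow> 'a v4 set set" where
  "polar_line l = (SOME m. \<exists>u w. u \<noteq> zero4 \<and> w \<noteq> zero4 \<and> pt u \<in> l \<and> pt w \<in> l \<and>
                                 pt u \<noteq> pt w \<and> m = polarv u \<inter> polarv w)"

definition dC_planes :: "nat \<Rightarrow> 'a::field v4 set set set" where
  "dC_planes d = {\<pi> \<in> Planes. card (\<pi> \<inter> Curve) = d}"

definition oneC_bar_planes :: "'a::field v4 set set set" where
  "oneC_bar_planes = {\<pi> \<in> Planes. \<pi> \<notin> GammaPlanes \<and> card (\<pi> \<inter> Curve) = 1}"

definition T_points :: "'a::field v4 set set" where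
  "T_points = {P \<in> Points. P \<notin> Curve \<and> (\<exists>s. P \<in> tanp s)}"

definition muGamma_points :: "nat \<Rightarrow> 'a::field v4 set set" where
  "muGamma_points \<mu> = {P \<in> Points. P \<notin> Curve \<and> card {\<pi> \<in> GammaPlanes. P \<in> \<pi>} = \<mu>}"

definition PiN :: "'a::field v4 set set set \<Rightarrow> 'a v4 set set \<Rightarrow> nat" where
  "PiN X m = card {\<pi> \<in> X. m \<subseteq> \<pi>}"

definition PN :: "'a::field v4 set set \<Rightarrow> 'a v4 set set \<Rightarrow> nat" where
  "PN X m = card {P \<in> X. P \<in> m}"

end

theory Submission
  imports Defs "HOL-Number_Theory.Residues" "HOL-Computational_Algebra.Polynomial"
begin

lemmas vs = smul_def vadd_def dot_def zero4_def

lemma v4_cases: obtains a b c d where "(v::'a v4) = (a,b,c,d)"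
  by (cases v) auto

lemma smul_smul: "smul a (smul b v) = smul (a*b) (v::'a::field v4)"
  by (cases v rule: v4_cases) (simp add: vs)

lemma smul_one[simp]: "smul 1 v = (v::'a::field v4)"
  by (cases v rule: v4_cases) (simp add: vs)

lemma smul_zero_iff: "smul k v = zero4 \<longleftrightarrow> k = 0 \<or> v = (zero4::'a::field v4)"
  by (cases v rule: v4_cases) (auto simp add: vs)

lemma dot_smul: "dot c (smul k v) = k * dot c (v::'a::field v4)"
  by (cases v rule: v4_cases; cases c rule: v4_cases) (simp add: vs algebra_simps)

lemma dot_lin: "dot c (vadd (smul a u) (smul b v)) = a * dot c u + b * dot c (v::'a::field v4)"
  by (cases v rule: v4_cases; cases c rule: v4_cases; cases u rule: v4_cases) (simp add: vs algebra_simps)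

lemma dot_comm: "dot c v = dot v (c::'a::field v4)"
  by (cases v rule: v4_cases; cases c rule: v4_cases) (simp add: vs algebra_simps)

lemma mem_pt: "v \<in> pt v"
  unfolding pt_def by (rule CollectI, rule exI[of _ 1]) simp

lemma pt_eq_iff:
  assumes "v \<noteq> zero4"
  shows "pt v = pt w \<longleftrightarrow> (\<exists>k. k \<noteq> 0 \<and> w = smul k (v::'a::field v4))"
proof
  assume "pt v = pt w"
  then have "w \<in> pt v" using mem_pt by metis
  then show "\<exists>k. k \<noteq> 0 \<and> w = smul k v" by (auto simp: pt_def)
next
  assume "\<exists>k. k \<noteq> 0 \<and> w = smul k v"
  then obtain k where k: "k \<noteq> 0" "w = smul k v" by blast
  show "pt v = pt w"
  proof (auto simp: pt_def k smul_smul)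
    fix j assume "j \<noteq> (0::'a)"
    then show "\<exists>k'. k' \<noteq> 0 \<and> smul j v = smul (k' * k) v"
      using k by (intro exI[of _ "j / k"]) auto
  next
    fix j assume "j \<noteq> (0::'a)"
    then show "\<exists>k'. k' \<noteq> 0 \<and> smul (j * k) v = smul k' v"
      using k by (intro exI[of _ "j * k"]) auto
  qed
qed

lemma pt_smul: "k \<noteq> 0 \<Longrightarrow> v \<noteq> zero4 \<Longrightarrow> pt (smul k v) = pt (v::'a::field v4)"
  using pt_eq_iff by metis

lemma planeset_mem:
  assumes "x \<noteq> zero4"
  shows "pt x \<in> planeset c \<longleftrightarrow> dot c (x::'a::field v4) = 0"
proof
  assume "pt x \<in> planeset c"
  then obtain y where y: "pt x = pt y" "y \<noteq> zero4" "dot c y = 0" by (auto simp: planeset_def)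
  then obtain k where "x = smul k y" using pt_eq_iff by metis
  then show "dot c x = 0" using y by (simp add: dot_smul)
next
  assume "dot c x = 0" then show "pt x \<in> planeset c" using assms unfolding planeset_def by blast
qed

lemma planeset_elem: "P \<in> planeset c \<Longrightarrow> \<exists>x. x \<noteq> zero4 \<and> P = pt x \<and> dot c x = 0"
  by (auto simp: planeset_def)

lemma kspan_smul: "x \<in> kspan u v \<Longrightarrow> smul k x \<in> kspan u (v::'a::field v4)"
  unfolding kspan_def
  apply clarify
  subgoal for a b by (rule exI[of _ "k*a"], rule exI[of _ "k*b"]) (cases u rule: v4_cases; cases v rule: v4_cases; simp add: vs algebra_simps)
  done

lemma lineset_mem:
  assumes "x \<noteq> zero4"
  shows "pt x \<in> lineset u v \<longleftrightarrow> x \<in> kspan u (v::'a::field v4)"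
proof
  assume "pt x \<in> lineset u v"
  then obtain a b where y: "pt x = pt (vadd (smul a u) (smul b v))" "vadd (smul a u) (smul b v) \<noteq> zero4" by (auto simp: lineset_def)
  then obtain k where "vadd (smul a u) (smul b v) = smul k x" using pt_eq_iff assms by metis
  moreover have "k \<noteq> 0" using y calculation by (auto simp: smul_zero_iff)
  ultimately have "smul (1/k) (vadd (smul a u) (smul b v)) = x" by (simp add: smul_smul)
  then show "x \<in> kspan u v" using kspan_smul[of "vadd (smul a u) (smul b v)" u v "1/k"] by (auto simp: kspan_def)
qed (use assms in \<open>auto simp: lineset_def kspan_def\<close>)

lemma lineset_elem: "P \<in> lineset u v \<Longrightarrow> \<exists>x. x \<noteq> zero4 \<and> P = pt x \<and> x \<in> kspan u v"
  unfolding lineset_def kspan_def by blast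


definition sol :: "'a::field v4 \<Rightarrow> 'a v4 \<Rightarrow> 'a v4 set" where
  "sol c d = {x. dot c x = 0 \<and> dot d x = 0}"

lemma K01:
  fixes c0 c1 c2 c3 d0 d1 d2 d3 :: "'a::field"
  assumes p: "c0*d1 - c1*d0 \<noteq> 0"
  shows "\<exists>u v. indep u v \<and> sol (c0,c1,c2,c3) (d0,d1,d2,d3) = kspan u v"
proof -
  define p01 where "p01 = c0*d1 - c1*d0"
  define u where "u = (c1*d2-c2*d1, c2*d0-c0*d2, p01, 0::'a)"
  define v where "v = (c1*d3-c3*d1, c3*d0-c0*d3, 0::'a, p01)"
  have "indep u v" using p unfolding indep_def u_def v_def p01_def by (simp add: vs)
  moreover have "sol (c0,c1,c2,c3) (d0,d1,d2,d3) = kspan u v"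
  proof
    show "kspan u v \<subseteq> sol (c0,c1,c2,c3) (d0,d1,d2,d3)"
      unfolding kspan_def sol_def u_def v_def p01_def by (auto simp: vs algebra_simps)
  next
    show "sol (c0,c1,c2,c3) (d0,d1,d2,d3) \<subseteq> kspan u v"
    proof
      fix z assume "z \<in> sol (c0,c1,c2,c3) (d0,d1,d2,d3)"
      obtain z0 z1 z2 z3 where z: "z = (z0,z1,z2,z3)" by (rule v4_cases)
      have e1: "c0*z0+c1*z1+c2*z2+c3*z3 = 0" and e2: "d0*z0+d1*z1+d2*z2+d3*z3 = 0"
        using \<open>z \<in> _\<close> by (auto simp: sol_def z vs)
      have h0: "p01*z0 = z2*(c1*d2-c2*d1) + z3*(c1*d3-c3*d1)"
      proof -
        have "p01*z0 - (z2*(c1*d2-c2*d1) + z3*(c1*d3-c3*d1)) = d1*(c0*z0+c1*z1+c2*z2+c3*z3) - c1*(d0*z0+d1*z1+d2*z2+d3*z3)"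
          unfolding p01_def by (simp add: algebra_simps)
        then show ?thesis using e1 e2 by simp
      qed
      have h1: "p01*z1 = z2*(c2*d0-c0*d2) + z3*(c3*d0-c0*d3)"
      proof -
        have "p01*z1 - (z2*(c2*d0-c0*d2) + z3*(c3*d0-c0*d3)) = c0*(d0*z0+d1*z1+d2*z2+d3*z3) - d0*(c0*z0+c1*z1+c2*z2+c3*z3)"
          unfolding p01_def by (simp add: algebra_simps)
        then show ?thesis using e1 e2 by simp
      qed
      have pn: "p01 \<noteq> 0" using p p01_def by simp
      have h0': "z0 = (z2*(c1*d2-c2*d1) + z3*(c1*d3-c3*d1)) / p01" using h0 pn by (simp add: eq_divide_eq mult.commute)
      have h1': "z1 = (z2*(c2*d0-c0*d2) + z3*(c3*d0-c0*d3)) / p01" using h1 pn by (simp add: eq_divide_eq mult.commute)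
      have "z = vadd (smul (z2/p01) u) (smul (z3/p01) v)"
        unfolding z u_def v_def using pn
        by (simp add: vs h0' h1' add_divide_distrib)
      then show "z \<in> kspan u v" unfolding kspan_def by blast
    qed
  qed
  ultimately show ?thesis by blast
qed

lemma K_transport:
  fixes \<sigma> :: "'a::field v4 \<Rightarrow> 'a v4"
  assumes inv: "\<And>x. \<sigma> (\<sigma> x) = x"
    and dt: "\<And>c x. dot (\<sigma> c) (\<sigma> x) = dot c x"
    and lin: "\<And>a b u v. \<sigma> (vadd (smul a u) (smul b v)) = vadd (smul a (\<sigma> u)) (smul b (\<sigma> v))"
    and z: "\<sigma> zero4 = zero4"
    and h: "\<exists>u v. indep u v \<and> sol (\<sigma> c) (\<sigma> d) = kspan u v"
  shows "\<exists>u v. indep u v \<and> sol c d = kspan u v"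
proof -
  obtain u v where uv: "indep u v" "sol (\<sigma> c) (\<sigma> d) = kspan u v" using h by blast
  have "indep (\<sigma> u) (\<sigma> v)" unfolding indep_def
  proof (intro allI impI)
    fix a b assume "vadd (smul a (\<sigma> u)) (smul b (\<sigma> v)) = zero4"
    then have "\<sigma> (vadd (smul a u) (smul b v)) = \<sigma> zero4" using z lin by simp
    then have "vadd (smul a u) (smul b v) = zero4" using inv by metis
    then show "a = 0 \<and> b = 0" using uv(1) indep_def by blast
  qed
  moreover have "sol c d = kspan (\<sigma> u) (\<sigma> v)"
  proof -
    have "x \<in> sol c d \<longleftrightarrow> \<sigma> x \<in> kspan u v" for x
    proof -
      have "x \<in> sol c d \<longleftrightarrow> \<sigma> x \<in> sol (\<sigma> c) (\<sigma> d)" by (simp add: sol_def dt)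
      then show ?thesis using uv(2) by simp
    qed
    moreover have "\<sigma> x \<in> kspan u v \<longleftrightarrow> x \<in> kspan (\<sigma> u) (\<sigma> v)" for x
    proof
      assume "\<sigma> x \<in> kspan u v"
      then obtain a b where "\<sigma> x = vadd (smul a u) (smul b v)" unfolding kspan_def by blast
      then have "x = vadd (smul a (\<sigma> u)) (smul b (\<sigma> v))" using inv lin by metis
      then show "x \<in> kspan (\<sigma> u) (\<sigma> v)" unfolding kspan_def by blast
    next
      assume "x \<in> kspan (\<sigma> u) (\<sigma> v)"
      then obtain a b where "x = vadd (smul a (\<sigma> u)) (smul b (\<sigma> v))" unfolding kspan_def by blast
      then have "\<sigma> x = vadd (smul a u) (smul b v)" using inv lin by metis
      then show "\<sigma> x \<in> kspan u v" unfolding kspan_def by blast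
    qed
    ultimately show ?thesis by blast
  qed
  ultimately show ?thesis by blast
qed

lemma indep_some_p:
  fixes c0 c1 c2 c3 d0 d1 d2 d3 :: "'a::field"
  assumes "indep (c0,c1,c2,c3) (d0,d1,d2,d3)"
  shows "c0*d1 - c1*d0 \<noteq> 0 \<or> c0*d2 - c2*d0 \<noteq> 0 \<or> c0*d3 - c3*d0 \<noteq> 0 \<or>
         c1*d2 - c2*d1 \<noteq> 0 \<or> c1*d3 - c3*d1 \<noteq> 0 \<or> c2*d3 - c3*d2 \<noteq> 0"
proof (rule ccontr)
  assume a: "\<not> ?thesis"
  have I: "\<And>a b. vadd (smul a (c0,c1,c2,c3)) (smul b (d0,d1,d2,d3)) = zero4 \<Longrightarrow> b = 0"
    using assms unfolding indep_def by blast
  consider "c0 \<noteq> 0" | "c1 \<noteq> 0" | "c2 \<noteq> 0" | "c3 \<noteq> 0" | "c0 = 0 \<and> c1 = 0 \<and> c2 = 0 \<and> c3 = 0" by blast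
  then show False
  proof cases
    case 1 then show False using I[of d0 "-c0"] a by (simp add: vs algebra_simps)
  next
    case 2 then show False using I[of d1 "-c1"] a by (simp add: vs algebra_simps)
  next
    case 3 then show False using I[of d2 "-c2"] a by (simp add: vs algebra_simps)
  next
    case 4 then show False using I[of d3 "-c3"] a by (simp add: vs algebra_simps)
  next
    case 5
    then have "vadd (smul 1 (c0,c1,c2,c3)) (smul 0 (d0,d1,d2,d3)) = zero4" by (simp add: vs)
    then have "(1::'a) = 0" using assms unfolding indep_def by blast
    then show False by simp
  qed
qed

lemma K:
  fixes c d :: "'a::field v4"
  assumes ind: "indep c d"
  shows "\<exists>u v. indep u v \<and> sol c d = kspan u v"
proof -
  obtain c0 c1 c2 c3 where c: "c = (c0,c1,c2,c3)" by (rule v4_cases)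
  obtain d0 d1 d2 d3 where d: "d = (d0,d1,d2,d3)" by (rule v4_cases)
  note P = indep_some_p[OF ind[unfolded c d]]
  let ?s02 = "\<lambda>(a::'a,b::'a,c::'a,d::'a). (a,c,b,d)"
  let ?s03 = "\<lambda>(a::'a,b::'a,c::'a,d::'a). (a,d,c,b)"
  let ?s12 = "\<lambda>(a::'a,b::'a,c::'a,d::'a). (c,b,a,d)"
  let ?s13 = "\<lambda>(a::'a,b::'a,c::'a,d::'a). (d,b,c,a)"
  let ?s23 = "\<lambda>(a::'a,b::'a,c::'a,d::'a). (c,d,a,b)"
  from P consider "c0*d1 - c1*d0 \<noteq> 0" | "c0*d2 - c2*d0 \<noteq> 0" | "c0*d3 - c3*d0 \<noteq> 0" |
         "c1*d2 - c2*d1 \<noteq> 0" | "c1*d3 - c3*d1 \<noteq> 0" | "c2*d3 - c3*d2 \<noteq> 0" by blast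
  then show ?thesis
  proof cases
    case 1 then show ?thesis using K01 c d by blast
  next
    case 2
    show ?thesis
      apply (rule K_transport[where \<sigma>="?s02"])
          apply (auto simp: vs split: prod.splits)[4]
      using K01[of c0 d2 c2 d0 c1 c3 d1 d3] 2 by (simp add: c d)
  next
    case 3
    show ?thesis
      apply (rule K_transport[where \<sigma>="?s03"])
          apply (auto simp: vs split: prod.splits)[4]
      using K01[of c0 d3 c3 d0 c2 c1 d2 d1] 3 by (simp add: c d)
  next
    case 4
    have "c2*d1 - c1*d2 \<noteq> 0" using 4 by (metis eq_iff_diff_eq_0)
    then show ?thesis
      apply -
      apply (rule K_transport[where \<sigma>="?s12"])
          apply (auto simp: vs split: prod.splits)[4]
      using K01[of c2 d1 c1 d2 c0 c3 d0 d3] by (simp add: c d)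
  next
    case 5
    have "c3*d1 - c1*d3 \<noteq> 0" using 5 by (metis eq_iff_diff_eq_0)
    then show ?thesis
      apply -
      apply (rule K_transport[where \<sigma>="?s13"])
          apply (auto simp: vs split: prod.splits)[4]
      using K01[of c3 d1 c1 d3 c2 c0 d2 d0] by (simp add: c d)
  next
    case 6
    show ?thesis
      apply (rule K_transport[where \<sigma>="?s23"])
          apply (auto simp: vs split: prod.splits)[4]
      using K01[of c2 d3 c3 d2 c0 c1 d0 d1] 6 by (simp add: c d)
  qed
qed


lemma indep_nz: "indep u v \<Longrightarrow> u \<noteq> zero4 \<and> v \<noteq> (zero4::'a::field v4)"
proof -
  assume i: "indep u v"
  have "u \<noteq> zero4"
  proof
    assume "u = zero4"
    then have "vadd (smul 1 u) (smul 0 v) = zero4" by (cases v rule: v4_cases) (simp add: vs)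
    then have "(1::'a) = 0" using i unfolding indep_def by blast
    then show False by simp
  qed
  moreover have "v \<noteq> zero4"
  proof
    assume "v = zero4"
    then have "vadd (smul 0 u) (smul 1 v) = zero4" by (cases u rule: v4_cases) (simp add: vs)
    then have "(1::'a) = 0" using i unfolding indep_def by blast
    then show False by simp
  qed
  ultimately show ?thesis by blast
qed

lemma kspan_u: "u \<in> kspan u (v::'a::field v4)"
  unfolding kspan_def by (rule CollectI, rule exI[of _ 1], rule exI[of _ 0])
    (cases u rule: v4_cases; cases v rule: v4_cases; simp add: vs)

lemma kspan_v: "v \<in> kspan u (v::'a::field v4)"
  unfolding kspan_def by (rule CollectI, rule exI[of _ 0], rule exI[of _ 1])
    (cases u rule: v4_cases; cases v rule: v4_cases; simp add: vs)

lemma kspan_closed: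
  assumes "x \<in> kspan u v" "y \<in> kspan u (v::'a::field v4)"
  shows "vadd (smul a x) (smul b y) \<in> kspan u v"
proof -
  obtain a1 b1 where x: "x = vadd (smul a1 u) (smul b1 v)" using assms(1) unfolding kspan_def by blast
  obtain a2 b2 where y: "y = vadd (smul a2 u) (smul b2 v)" using assms(2) unfolding kspan_def by blast
  have "vadd (smul a x) (smul b y) = vadd (smul (a*a1+b*a2) u) (smul (a*b1+b*b2) v)"
    unfolding x y by (cases u rule: v4_cases; cases v rule: v4_cases; simp add: vs algebra_simps)
  then show ?thesis unfolding kspan_def by blast
qed

lemma kspan_sub:
  assumes "x \<in> kspan u v" "y \<in> kspan u (v::'a::field v4)"
  shows "kspan x y \<subseteq> kspan u v"
  using kspan_closed[OF assms] unfolding kspan_def by blast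

lemma kspan_eq:
  fixes u v u' v' :: "'a::field v4"
  assumes i: "indep u v" and i': "indep u' v'" and h: "u' \<in> kspan u v" "v' \<in> kspan u v"
  shows "kspan u' v' = kspan u v"
proof
  show "kspan u' v' \<subseteq> kspan u v" using kspan_sub[OF h] .
next
  obtain a b where u': "u' = vadd (smul a u) (smul b v)" using h(1) unfolding kspan_def by blast
  obtain c d where v': "v' = vadd (smul c u) (smul d v)" using h(2) unfolding kspan_def by blast
  have D: "a*d - b*c \<noteq> 0"
  proof
    assume D0: "a*d - b*c = 0"
    have "vadd (smul d u') (smul (-b) v') = zero4"
      unfolding u' v' using D0 by (cases u rule: v4_cases; cases v rule: v4_cases; simp add: vs algebra_simps)
    then have db: "d = 0 \<and> b = 0" using i' unfolding indep_def by (metis neg_equal_0_iff_equal)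
    have "vadd (smul c u') (smul (-a) v') = zero4"
      unfolding u' v' using D0 by (cases u rule: v4_cases; cases v rule: v4_cases; simp add: vs algebra_simps)
    then have "c = 0 \<and> a = 0" using i' unfolding indep_def by (metis neg_equal_0_iff_equal)
    then have "u' = zero4" using db u' by (cases u rule: v4_cases; cases v rule: v4_cases; simp add: vs)
    then show False using indep_nz[OF i'] by blast
  qed
  have e1: "smul (a*d-b*c) u = vadd (smul d u') (smul (-b) v')"
    unfolding u' v' by (cases u rule: v4_cases; cases v rule: v4_cases; simp add: vs algebra_simps)
  have e2: "smul (a*d-b*c) v = vadd (smul (-c) u') (smul a v')"
    unfolding u' v' by (cases u rule: v4_cases; cases v rule: v4_cases; simp add: vs algebra_simps)
  have "smul (1/(a*d-b*c)) (smul (a*d-b*c) u) \<in> kspan u' v'"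
    unfolding e1 by (rule kspan_smul) (auto simp: kspan_def)
  moreover have "smul (1/(a*d-b*c)) (smul (a*d-b*c) v) \<in> kspan u' v'"
    unfolding e2 by (rule kspan_smul) (auto simp: kspan_def)
  ultimately have "u \<in> kspan u' v'" "v \<in> kspan u' v'" using D by (simp_all add: smul_smul)
  then show "kspan u v \<subseteq> kspan u' v'" by (rule kspan_sub)
qed


lemma dot_smul_left: "dot (smul k c) v = k * dot c (v::'a::field v4)"
  by (cases v rule: v4_cases; cases c rule: v4_cases) (simp add: vs algebra_simps)

lemma smul_lin: "smul k (vadd (smul a x) (smul b y)) = vadd (smul (k*a) x) (smul (k*b) (y::'a::field v4))"
  by (cases x rule: v4_cases; cases y rule: v4_cases) (simp add: vs algebra_simps)

lemma indep_combo_nz: "indep x y \<Longrightarrow> a \<noteq> 0 \<or> b \<noteq> 0 \<Longrightarrow> vadd (smul a x) (smul b y) \<noteq> zero4"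
  unfolding indep_def by blast

lemma planeset_smul: "k \<noteq> 0 \<Longrightarrow> planeset (smul k c) = planeset (c::'a::field v4)"
  unfolding planeset_def by (simp add: dot_smul_left)

lemma line_sub_plane:
  assumes i: "indep u v"
  shows "lineset u v \<subseteq> planeset c \<longleftrightarrow> dot c u = 0 \<and> dot c (v::'a::field v4) = 0"
proof
  assume s: "lineset u v \<subseteq> planeset c"
  have "pt u \<in> lineset u v" "pt v \<in> lineset u v"
    using lineset_mem indep_nz[OF i] kspan_u kspan_v by blast+
  then show "dot c u = 0 \<and> dot c v = 0" using s planeset_mem indep_nz[OF i] by blast
next
  assume d: "dot c u = 0 \<and> dot c v = 0"
  show "lineset u v \<subseteq> planeset c"
  proof
    fix P assume "P \<in> lineset u v"
    then obtain x where x: "x \<noteq> zero4" "P = pt x" "x \<in> kspan u v" using lineset_elem by blast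
    then obtain a b where "x = vadd (smul a u) (smul b v)" unfolding kspan_def by blast
    then have "dot c x = 0" using d by (simp add: dot_lin)
    then show "P \<in> planeset c" using x planeset_mem by blast
  qed
qed

lemma pt_prop:
  fixes x y :: "'a::field v4"
  assumes "y \<noteq> zero4" "x \<noteq> zero4" "smul B y = smul al x" "B \<noteq> 0"
  shows "pt y = pt x"
proof -
  have y: "y = smul (al/B) x" using assms(3,4)
    by (metis (no_types, lifting) assms(3) divide_self_if mult.commute nonzero_divide_eq_eq smul_one smul_smul times_divide_eq_left)
  then have "al \<noteq> 0" using assms(1) by (auto simp: smul_zero_iff)
  then show ?thesis using y assms pt_smul[of "al/B" x] by simp
qed

lemma planeset_prop:
  fixes c c' :: "'a::field v4"
  assumes "c' \<noteq> zero4" "smul B c' = smul al c" "B \<noteq> 0"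
  shows "planeset c' = planeset c"
proof -
  have y: "c' = smul (al/B) c" using assms(2,3)
    by (metis (no_types, lifting) assms(2) divide_self_if mult.commute nonzero_divide_eq_eq smul_one smul_smul times_divide_eq_left)
  then have "al \<noteq> 0" using assms(1) by (auto simp: smul_zero_iff)
  then show ?thesis using y assms planeset_smul[of "al/B" c] by simp
qed

lemma plane_through:
  fixes u v w :: "'a::field v4"
  assumes i: "indep u v" and w: "w \<noteq> zero4" "w \<notin> kspan u v"
  shows "\<exists>!\<pi>. \<pi> \<in> Planes \<and> lineset u v \<subseteq> \<pi> \<and> pt w \<in> \<pi>"
proof -
  have iuv: "indep u v" using i .
  obtain c1 c2 where c: "indep c1 c2" "sol u v = kspan c1 c2" using K[OF iuv] by blast
  obtain u' v' where uv': "indep u' v'" "sol c1 c2 = kspan u' v'" using K[OF c(1)] by blast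
  have c12: "dot c1 u = 0" "dot c1 v = 0" "dot c2 u = 0" "dot c2 v = 0"
    using c(2) kspan_u[of c1 c2] kspan_v[of c2 c1] unfolding sol_def by (auto simp: dot_comm)
  have "u \<in> sol c1 c2" "v \<in> sol c1 c2" using c12 unfolding sol_def by auto
  then have ks: "kspan u v = sol c1 c2" using kspan_eq[OF uv'(1) i] uv'(2) by simp
  define A where "A = dot c1 w"
  define B where "B = dot c2 w"
  have AB: "A \<noteq> 0 \<or> B \<noteq> 0" using w ks unfolding A_def B_def sol_def by auto
  define c where "c = vadd (smul B c1) (smul (-A) c2)"
  have cnz: "c \<noteq> zero4" unfolding c_def using AB by (intro indep_combo_nz[OF c(1)]) auto
  have cu: "dot c u = 0" "dot c v = 0" "dot c w = 0"
    unfolding c_def using c12 by (simp_all add: dot_comm[of _ u] dot_comm[of _ v] dot_comm[of _ w] dot_lin A_def B_def)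
  show ?thesis
  proof (rule ex1I[of _ "planeset c"])
    show "planeset c \<in> Planes \<and> lineset u v \<subseteq> planeset c \<and> pt w \<in> planeset c"
      using cnz cu line_sub_plane[OF i] planeset_mem[OF w(1)] unfolding Planes_def by blast
  next
    fix \<pi> assume \<pi>: "\<pi> \<in> Planes \<and> lineset u v \<subseteq> \<pi> \<and> pt w \<in> \<pi>"
    then obtain c' where c': "c' \<noteq> zero4" "\<pi> = planeset c'" unfolding Planes_def by blast
    have "dot c' u = 0" "dot c' v = 0" using \<pi> c' line_sub_plane[OF i] by auto
    then have "c' \<in> sol u v" unfolding sol_def by (simp add: dot_comm)
    then have "c' \<in> kspan c1 c2" using c(2) by simp
    then obtain al be where c'e: "c' = vadd (smul al c1) (smul be c2)" unfolding kspan_def by blast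
    have "dot c' w = 0" using \<pi> c' planeset_mem[OF w(1)] by blast
    then have r: "al*A + be*B = 0" unfolding c'e by (simp add: dot_comm[of _ w] dot_lin A_def B_def)
    show "\<pi> = planeset c"
    proof (cases "B = 0")
      case False
      have "B*be = al*(-A)" using r by (simp add: algebra_simps add_eq_0_iff2)
      then have "smul B c' = smul al c" unfolding c'e c_def smul_lin by (simp add: mult.commute)
      then show ?thesis using planeset_prop[OF c'(1)] False c'(2) by blast
    next
      case True
      then have A: "A \<noteq> 0" using AB by simp
      then have "al = 0" using r True by simp
      then have "smul A c' = smul (-be) c" unfolding c'e c_def using True
        by (cases c1 rule: v4_cases; cases c2 rule: v4_cases; simp add: vs algebra_simps)
      then show ?thesis using planeset_prop[OF c'(1)] A c'(2) by blast
    qed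
  qed
qed

lemma line_meets_plane:
  fixes u v c :: "'a::field v4"
  assumes i: "indep u v" and n: "\<not> lineset u v \<subseteq> planeset c"
  shows "\<exists>!P. P \<in> lineset u v \<and> P \<in> planeset c"
proof -
  define A where "A = dot c u"
  define B where "B = dot c v"
  have AB: "A \<noteq> 0 \<or> B \<noteq> 0" using n line_sub_plane[OF i] unfolding A_def B_def by simp
  define x where "x = vadd (smul B u) (smul (-A) v)"
  have xnz: "x \<noteq> zero4" unfolding x_def using AB by (intro indep_combo_nz[OF i]) auto
  have xc: "dot c x = 0" unfolding x_def by (simp add: dot_lin A_def B_def)
  have xl: "x \<in> kspan u v" unfolding x_def kspan_def by blast
  show ?thesis
  proof (rule ex1I[of _ "pt x"])
    show "pt x \<in> lineset u v \<and> pt x \<in> planeset c"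
      using lineset_mem[OF xnz] planeset_mem[OF xnz] xc xl by blast
  next
    fix P assume P: "P \<in> lineset u v \<and> P \<in> planeset c"
    then obtain y where y: "y \<noteq> zero4" "P = pt y" "y \<in> kspan u v" using lineset_elem by blast
    then obtain a b where ye: "y = vadd (smul a u) (smul b v)" unfolding kspan_def by blast
    have "dot c y = 0" using P y planeset_mem by blast
    then have r: "a*A + b*B = 0" unfolding ye by (simp add: dot_lin A_def B_def)
    show "P = pt x"
    proof (cases "B = 0")
      case False
      have "B*b = a*(-A)" using r by (simp add: algebra_simps add_eq_0_iff2)
      then have "smul B y = smul a x" unfolding ye x_def smul_lin by (simp add: mult.commute)
      then show ?thesis using pt_prop[OF y(1) xnz] False y(2) by blast
    next
      case True
      then have A: "A \<noteq> 0" using AB by simp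
      then have "a = 0" using r True by simp
      then have "smul A y = smul (-b) x" unfolding ye x_def using True
        by (cases u rule: v4_cases; cases v rule: v4_cases; simp add: vs algebra_simps)
      then show ?thesis using pt_prop[OF y(1) xnz] A y(2) by blast
    qed
  qed
qed


lemma cvec_nz: "cvec s \<noteq> (zero4::'a::field v4)"
  by (cases s) (auto simp: cvec_def vs)

lemma cpt_inj: "inj (cpt :: 'a::field option \<Rightarrow> 'a v4 set)"
proof (rule injI)
  fix s t :: "'a option" assume "cpt s = cpt t"
  then obtain k where k: "k \<noteq> 0" "cvec t = smul k (cvec s)" using pt_eq_iff[OF cvec_nz] unfolding cpt_def by metis
  show "s = t"
  proof (cases s; cases t)
    fix a b assume "s = Some a" "t = Some b" then show "s = t" using k by (simp add: cvec_def vs)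
  qed (use k in \<open>auto simp: cvec_def vs\<close>)
qed

lemma card_Curve: "card (Curve :: 'a::{field,finite} v4 set set) = card (UNIV :: 'a set) + 1"
proof -
  have "card (Curve :: 'a v4 set set) = card (UNIV :: 'a option set)"
    unfolding Curve_def by (rule card_image[OF cpt_inj])
  also have "(UNIV :: 'a option set) = insert None (Some ` UNIV)" by (auto intro: option.exhaust)
  also have "card \<dots> = card (UNIV :: 'a set) + 1"
    by (subst card_insert_disjoint) (auto simp: card_image)
  finally show ?thesis .
qed

lemma cubic_roots:
  fixes a b c d :: "'a::{field,finite}"
  assumes nz: "\<not> (a = 0 \<and> b = 0 \<and> c = 0 \<and> d = 0)"
  shows "card {s. case s of None \<Rightarrow> a = 0 | Some t \<Rightarrow> a*t^3+b*t^2+c*t+d = 0} \<le> 3"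
proof -
  define p where "p = [:d, c, b, a:]"
  have pnz: "p \<noteq> 0" using nz unfolding p_def by auto
  have pv: "poly p t = a*t^3+b*t^2+c*t+d" for t unfolding p_def by (simp add: algebra_simps power3_eq_cube power2_eq_square)
  have S: "{s. case s of None \<Rightarrow> a = 0 | Some t \<Rightarrow> a*t^3+b*t^2+c*t+d = 0} =
        (if a = 0 then {None} else {}) \<union> Some ` {t. poly p t = 0}"
  proof (rule Set.set_eqI)
    fix s :: "'a option"
    show "s \<in> {s. case s of None \<Rightarrow> a = 0 | Some t \<Rightarrow> a*t^3+b*t^2+c*t+d = 0} \<longleftrightarrow>
        s \<in> (if a = 0 then {None} else {}) \<union> Some ` {t. poly p t = 0}"
      by (cases s) (auto simp: pv)
  qed
  have R: "card {t. poly p t = 0} \<le> degree p" by (rule card_poly_roots_bound[OF pnz])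
  show ?thesis
  proof (cases "a = 0")
    case True
    have "degree p \<le> 2" unfolding p_def True
      using degree_pCons_le[of d "[:c,b:]"] degree_pCons_le[of c "[:b:]"] by simp
    have "card (Some ` {t. poly p t = 0}) \<le> 2" using R \<open>degree p \<le> 2\<close> by (simp add: card_image)
    then show ?thesis unfolding S using True card_Un_le[of "{None}" "Some ` {t. poly p t = 0}"] by simp
  next
    case False
    have "degree p \<le> 3" unfolding p_def
      using degree_pCons_le[of d "pCons c (pCons b [:a:])"] degree_pCons_le[of c "pCons b [:a:]"] degree_pCons_le[of b "[:a:]"] by simp
    then show ?thesis unfolding S using False R by (simp add: card_image)
  qed
qed


lemma double_count:
  assumes "finite A" "finite B"
  shows "(\<Sum>a\<in>A. card {b\<in>B. R a b}) = (\<Sum>b\<in>B. card {a\<in>A. R a b})"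
proof -
  have "(\<Sum>a\<in>A. card {b\<in>B. R a b}) = (\<Sum>a\<in>A. \<Sum>b\<in>B. of_bool (R a b))"
    using assms by (intro sum.cong) (auto simp: Int_def conj_commute)
  also have "\<dots> = (\<Sum>b\<in>B. \<Sum>a\<in>A. of_bool (R a b))" by (rule sum.swap)
  also have "\<dots> = (\<Sum>b\<in>B. card {a\<in>A. R a b})"
    using assms by (intro sum.cong) (auto simp: Int_def conj_commute)
  finally show ?thesis .
qed

lemma split123:
  assumes "finite X" "\<forall>x\<in>X. f x \<le> (3::nat)"
  shows "(\<Sum>x\<in>X. f x) = card {x\<in>X. f x = 1} + 2 * card {x\<in>X. f x = 2} + 3 * card {x\<in>X. f x = 3}"
proof -
  have "(\<Sum>x\<in>X. f x) = (\<Sum>x\<in>X. of_bool (f x = 1) + 2 * of_bool (f x = 2) + 3 * of_bool (f x = 3))"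
  proof (rule sum.cong)
    fix x assume "x \<in> X"
    then have "f x \<le> 3" using assms by blast
    then show "f x = of_bool (f x = 1) + 2 * of_bool (f x = 2) + 3 * of_bool (f x = 3)"
      by (cases "f x"; cases "f x - 1"; cases "f x - 2"; auto)
  qed simp
  also have "\<dots> = card {x\<in>X. f x = 1} + 2 * card {x\<in>X. f x = 2} + 3 * card {x\<in>X. f x = 3}"
    using assms(1) by (simp add: sum.distrib sum_distrib_left[symmetric] Int_def conj_commute)
  finally show ?thesis .
qed

lemma plane_curve_le3:
  assumes "\<pi> \<in> Planes"
  shows "card (\<pi> \<inter> (Curve :: 'a::{field,finite} v4 set set)) \<le> 3"
proof -
  obtain c where c: "c \<noteq> zero4" "\<pi> = planeset c" using assms unfolding Planes_def by blast
  obtain c0 c1 c2 c3 where ce: "c = (c0,c1,c2,c3)" by (rule v4_cases)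
  have "\<pi> \<inter> Curve = cpt ` {s. dot c (cvec s) = 0}"
    unfolding Curve_def c(2) cpt_def using planeset_mem[OF cvec_nz] by blast
  then have "card (\<pi> \<inter> Curve) \<le> card {s. dot c (cvec s) = 0}" by (simp add: card_image_le)
  also have "{s. dot c (cvec s) = 0} = {s. case s of None \<Rightarrow> c0 = 0 | Some t \<Rightarrow> c0*t^3+c1*t^2+c2*t+c3 = 0}"
  proof (rule Set.set_eqI)
    fix s show "s \<in> {s. dot c (cvec s) = 0} \<longleftrightarrow> s \<in> {s. case s of None \<Rightarrow> c0 = 0 | Some t \<Rightarrow> c0*t^3+c1*t^2+c2*t+c3 = 0}"
      by (cases s) (auto simp: ce cvec_def vs)
  qed
  also have "card \<dots> \<le> 3" by (rule cubic_roots) (use c(1) ce in \<open>auto simp: vs\<close>)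
  finally show ?thesis .
qed

lemma countA:
  fixes u v :: "'a::{field,finite} v4"
  assumes i: "indep u v" and disj: "lineset u v \<inter> Curve = {}"
    and ng: "\<forall>\<gamma>\<in>GammaPlanes. \<not> lineset u v \<subseteq> \<gamma>"
  shows "PiN oneC_bar_planes (lineset u v) + 2 * PiN (dC_planes 2) (lineset u v)
      + 3 * PiN (dC_planes 3) (lineset u v) = card (UNIV :: 'a set) + 1"
proof -
  let ?m = "lineset u v"
  define X where "X = {\<pi> \<in> Planes. ?m \<subseteq> \<pi>}"
  have one: "card {\<pi>\<in>X. P \<in> \<pi>} = 1" if P: "P \<in> Curve" for P
  proof -
    obtain s where s: "P = pt (cvec s)" using P unfolding Curve_def cpt_def by blast
    have "cvec s \<notin> kspan u v" using disj P s lineset_mem[OF cvec_nz] by blast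
    then have "\<exists>!\<pi>. \<pi> \<in> Planes \<and> ?m \<subseteq> \<pi> \<and> pt (cvec s) \<in> \<pi>" by (rule plane_through[OF i cvec_nz])
    then obtain \<pi>0 where h: "\<pi>0 \<in> Planes \<and> ?m \<subseteq> \<pi>0 \<and> pt (cvec s) \<in> \<pi>0"
      and u: "\<And>\<pi>. \<pi> \<in> Planes \<and> ?m \<subseteq> \<pi> \<and> pt (cvec s) \<in> \<pi> \<Longrightarrow> \<pi> = \<pi>0" by blast
    have "{\<pi>\<in>X. P \<in> \<pi>} = {\<pi>0}"
    proof (rule Set.set_eqI)
      fix \<pi> show "\<pi> \<in> {\<pi>\<in>X. P \<in> \<pi>} \<longleftrightarrow> \<pi> \<in> {\<pi>0}"
        using h u[of \<pi>] unfolding X_def s by auto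
    qed
    then show ?thesis by simp
  qed
  have "(\<Sum>\<pi>\<in>X. card (\<pi> \<inter> Curve)) = (\<Sum>\<pi>\<in>X. card {P\<in>Curve. P \<in> \<pi>})"
    by (intro sum.cong) (auto simp: Int_def conj_commute)
  also have "\<dots> = (\<Sum>P\<in>Curve. card {\<pi>\<in>X. P \<in> \<pi>})" by (rule double_count) simp_all
  also have "\<dots> = (\<Sum>P\<in>(Curve::'a v4 set set). 1)" using one by (intro sum.cong) auto
  also have "\<dots> = card (UNIV :: 'a set) + 1" using card_Curve by simp
  finally have S: "(\<Sum>\<pi>\<in>X. card (\<pi> \<inter> Curve)) = card (UNIV :: 'a set) + 1" .
  have le3: "\<forall>\<pi>\<in>X. card (\<pi> \<inter> (Curve::'a v4 set set)) \<le> 3" using plane_curve_le3 unfolding X_def by blast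
  have e1: "{\<pi>\<in>X. card (\<pi> \<inter> Curve) = 1} = {\<pi> \<in> oneC_bar_planes. ?m \<subseteq> \<pi>}"
    using ng unfolding X_def oneC_bar_planes_def by blast
  have e2: "{\<pi>\<in>X. card (\<pi> \<inter> Curve) = 2} = {\<pi> \<in> dC_planes 2. ?m \<subseteq> \<pi>}"
    unfolding X_def dC_planes_def by blast
  have e3: "{\<pi>\<in>X. card (\<pi> \<inter> Curve) = 3} = {\<pi> \<in> dC_planes 3. ?m \<subseteq> \<pi>}"
    unfolding X_def dC_planes_def by blast
  show ?thesis using split123[OF _ le3] S e1 e2 e3 unfolding PiN_def by simp
qed


definition oscv :: "'a::field option \<Rightarrow> 'a v4" where
  "oscv s = (case s of None \<Rightarrow> (0,0,0,1) | Some t \<Rightarrow> oscvec t)"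

lemma oscp_eq: "oscp s = planeset (oscv s)"
  by (cases s) (simp_all add: oscp_def oscv_def oscvec_def)

lemma oscv_nz: "oscv s \<noteq> (zero4::'a::field v4)"
  by (cases s) (auto simp: oscv_def oscvec_def vs)

lemma dot_oscv_cvec: "dot (oscv (Some t)) (cvec (Some s)) = (s - t)^3"
  "dot (oscv None) (cvec (Some s)) = (1::'a::field)"
  "dot (oscv (Some t)) (cvec None) = (1::'a::field)"
  "dot (oscv None) (cvec None) = (0::'a::field)"
  by (simp_all add: oscv_def oscvec_def cvec_def vs power3_eq_cube power2_eq_square algebra_simps)

lemma oscp_inj: "inj (oscp :: 'a::field option \<Rightarrow> 'a v4 set set)"
proof (rule injI)
  fix s t :: "'a option" assume e: "oscp s = oscp t"
  have "pt (cvec s) \<in> oscp s" unfolding oscp_eq planeset_mem[OF cvec_nz]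
    by (cases s) (simp_all add: dot_oscv_cvec)
  then have "pt (cvec s) \<in> oscp t" using e by simp
  then have d: "dot (oscv t) (cvec s) = 0" unfolding oscp_eq planeset_mem[OF cvec_nz] .
  show "s = t"
  proof (cases s; cases t)
    fix a b assume "s = Some a" "t = Some b" then show "s = t" using d by (simp add: dot_oscv_cvec)
  qed (use d in \<open>auto simp: dot_oscv_cvec\<close>)
qed

lemma card_Gamma: "card (GammaPlanes :: 'a::{field,finite} v4 set set set) = card (UNIV :: 'a set) + 1"
proof -
  have "card (GammaPlanes :: 'a v4 set set set) = card (UNIV :: 'a option set)"
    unfolding GammaPlanes_def by (rule card_image[OF oscp_inj])
  also have "(UNIV :: 'a option set) = insert None (Some ` UNIV)" by (auto intro: option.exhaust)
  also have "card \<dots> = card (UNIV :: 'a set) + 1"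
    by (subst card_insert_disjoint) (auto simp: card_image)
  finally show ?thesis .
qed

lemma card_gamma_through: "card {\<gamma>\<in>GammaPlanes. P \<in> \<gamma>} = card {s. P \<in> oscp (s::'a::field option)}"
proof -
  have "{\<gamma>\<in>GammaPlanes. P \<in> \<gamma>} = oscp ` {s. P \<in> oscp s}" unfolding GammaPlanes_def by blast
  then show ?thesis using card_image[OF inj_on_subset[OF oscp_inj]] by simp
qed

lemma gamma_set:
  fixes x0 x1 x2 x3 :: "'a::field"
  assumes "(x0,x1,x2,x3) \<noteq> zero4"
  shows "{s. pt (x0,x1,x2,x3) \<in> oscp s} = {s. case s of None \<Rightarrow> -x3 = 0 | Some t \<Rightarrow> (-x3)*t^3+(3*x2)*t^2+(-3*x1)*t+x0 = 0}"
proof (rule Set.set_eqI)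
  fix s show "s \<in> {s. pt (x0,x1,x2,x3) \<in> oscp s} \<longleftrightarrow> s \<in> {s. case s of None \<Rightarrow> -x3 = 0 | Some t \<Rightarrow> (-x3)*t^3+(3*x2)*t^2+(-3*x1)*t+x0 = 0}"
    unfolding oscp_eq planeset_mem[OF assms]
    by (cases s) (auto simp: oscv_def oscvec_def vs algebra_simps)
qed

lemma gamma_le3:
  fixes x :: "'a::{field,finite} v4"
  assumes "x \<noteq> zero4" "(3::'a) \<noteq> 0"
  shows "card {s. pt x \<in> oscp s} \<le> 3"
proof -
  obtain x0 x1 x2 x3 where x: "x = (x0,x1,x2,x3)" by (rule v4_cases)
  show ?thesis unfolding x gamma_set[OF assms(1)[unfolded x]]
    by (rule cubic_roots) (use assms x in \<open>auto simp: vs\<close>)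
qed


definition gp :: "'a::field \<Rightarrow> 'a \<Rightarrow> 'a \<Rightarrow> 'a \<Rightarrow> 'a \<Rightarrow> 'a" where
  "gp x0 x1 x2 x3 t = (-x3)*t^3+(3*x2)*t^2+(-3*x1)*t+x0"

lemma tan_None:
  fixes x0 x1 x2 x3 :: "'a::field"
  assumes "(x0,x1,x2,x3) \<noteq> zero4"
  shows "pt (x0,x1,x2,x3) \<in> tanp None \<longleftrightarrow> x2 = 0 \<and> x3 = 0"
  unfolding tanp_def using lineset_mem[OF assms] unfolding kspan_def by (auto simp: vs)

lemma tan_Some:
  fixes x :: "'a::field v4"
  assumes "x \<noteq> zero4"
  shows "pt x \<in> tanp (Some r) \<longleftrightarrow> (\<exists>a b. x = vadd (smul a (r^3,r^2,r,1)) (smul b (3*r^2,2*r,1,0)))"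
  unfolding tanp_def using lineset_mem[OF assms] unfolding kspan_def by auto

lemma double_root:
  fixes x0 x1 x2 x3 r r' :: "'a::field"
  assumes nz: "(x0,x1,x2,x3) \<noteq> zero4" and three: "(3::'a) \<noteq> 0"
    and g1: "gp x0 x1 x2 x3 r = 0" and g2: "gp x0 x1 x2 x3 r' = 0" and ne: "r \<noteq> r'"
    and rel: "3*x2 = x3*(2*r+r')"
  shows "pt (x0,x1,x2,x3) \<in> tanp (Some r)"
proof -
  have "gp x0 x1 x2 x3 r - gp x0 x1 x2 x3 r' = (r - r') * (3*x2*(r+r') - x3*(r^2+r*r'+r'^2) - 3*x1)"
    unfolding gp_def by (simp add: algebra_simps power2_eq_square power3_eq_cube)
  then have "3*x2*(r+r') - x3*(r^2+r*r'+r'^2) - 3*x1 = 0" using g1 g2 ne by simp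
  then have "3*x1 = x3*(2*r+r')*(r+r') - x3*(r^2+r*r'+r'^2)" using rel by (simp add: algebra_simps)
  then have r1: "3*x1 = x3*(r^2+2*r*r')" by (simp add: algebra_simps power2_eq_square)
  have "x0 = x3*r^3 - (3*x2)*r^2 + (3*x1)*r" using g1 unfolding gp_def by (simp add: algebra_simps)
  then have r0: "x0 = x3*r^2*r'" unfolding rel r1 by (simp add: algebra_simps power2_eq_square power3_eq_cube)
  have x2e: "x2 = x3*r + x3*(r'-r)/3" using rel three by (simp add: field_simps)
  have x1e: "x1 = x3*r^2 + 2*r*(x3*(r'-r)/3)" using r1 three by (simp add: field_simps) (simp add: algebra_simps power2_eq_square)
  have "(x0,x1,x2,x3) = vadd (smul x3 (r^3,r^2,r,1)) (smul (x3*(r'-r)/3) (3*r^2,2*r,1,0))"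
    using three by (simp add: vs r0 x1e x2e) (simp add: algebra_simps power2_eq_square power3_eq_cube)
  then show ?thesis using tan_Some[OF nz] by blast
qed

lemma T_iff':
  fixes x0 x1 x2 x3 :: "'a::{field,finite}"
  assumes nz: "(x0,x1,x2,x3) \<noteq> zero4" and three: "(3::'a) \<noteq> 0"
    and nc0: "pt (x0,x1,x2,x3) \<notin> Curve"
  shows "(\<exists>s. pt (x0,x1,x2,x3) \<in> tanp s) \<longleftrightarrow>
     card {s. case s of None \<Rightarrow> -x3 = 0 | Some t \<Rightarrow> gp x0 x1 x2 x3 t = 0} = 2"
proof -
  let ?R = "{s. case s of None \<Rightarrow> -x3 = 0 | Some t \<Rightarrow> gp x0 x1 x2 x3 t = 0}"
  have nc: "(x0,x1,x2,x3) \<noteq> smul a (cvec s)" if "a \<noteq> 0" for a s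
  proof
    assume "(x0,x1,x2,x3) = smul a (cvec s)"
    then have "pt (x0,x1,x2,x3) = cpt s" unfolding cpt_def using pt_smul[OF that cvec_nz] by simp
    then show False using nc0 unfolding Curve_def by blast
  qed
  show ?thesis
  proof
    assume "\<exists>s. pt (x0,x1,x2,x3) \<in> tanp s"
    then obtain s where s: "pt (x0,x1,x2,x3) \<in> tanp s" by blast
    show "card ?R = 2"
    proof (cases s)
      case None
      then have z: "x2 = 0" "x3 = 0" using s tan_None[OF nz] by auto
      have "x1 \<noteq> 0"
      proof
        assume "x1 = 0"
        then have "(x0,x1,x2,x3) = smul x0 (cvec None)" using z by (simp add: vs cvec_def)
        moreover have "x0 \<noteq> 0" using nz z \<open>x1 = 0\<close> by (auto simp: vs)
        ultimately show False using nc by blast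
      qed
      have "?R = {None, Some (x0/(3*x1))}"
      proof (rule Set.set_eqI)
        fix s' show "s' \<in> ?R \<longleftrightarrow> s' \<in> {None, Some (x0/(3*x1))}"
          using \<open>x1 \<noteq> 0\<close> three z by (cases s') (auto simp: gp_def field_simps)
      qed
      then show ?thesis by simp
    next
      case (Some r)
      then obtain a b where x: "(x0,x1,x2,x3) = vadd (smul a (r^3,r^2,r,1)) (smul b (3*r^2,2*r,1,0))"
        using s tan_Some[OF nz] by blast
      have b: "b \<noteq> 0"
      proof
        assume "b = 0"
        then have xe: "(x0,x1,x2,x3) = smul a (cvec (Some r))" using x by (simp add: vs cvec_def)
        then have "a \<noteq> 0" using nz by (auto simp: vs)
        then show False using nc xe by blast
      qed
      have g: "gp x0 x1 x2 x3 t = (r-t)^2 * (a*(r-t) + 3*b)" for t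
        using x unfolding gp_def by (simp add: vs) (simp add: algebra_simps power2_eq_square power3_eq_cube)
      have x3: "x3 = a" using x by (simp add: vs)
      have Rs: "Some t \<in> ?R \<longleftrightarrow> (r-t)^2 * (a*(r-t) + 3*b) = 0" for t using g by simp
      have Rn: "None \<in> ?R \<longleftrightarrow> a = 0" using x3 by simp
      show ?thesis
      proof (cases "a = 0")
        case True
        have "?R = {None, Some r}"
        proof (rule Set.set_eqI)
          fix s' show "s' \<in> ?R \<longleftrightarrow> s' \<in> {None, Some r}"
          proof (cases s')
            case None then show ?thesis using Rn True by simp
          next
            case (Some t) then show ?thesis using Rs[of t] True b three by auto
          qed
        qed
        then show ?thesis by simp
      next
        case False
        have "?R = {Some r, Some (r + 3*b/a)}"
        proof (rule Set.set_eqI)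
          fix s' show "s' \<in> ?R \<longleftrightarrow> s' \<in> {Some r, Some (r + 3*b/a)}"
          proof (cases s')
            case (Some t)
            have "a*(r-t) + 3*b = 0 \<longleftrightarrow> t = r + 3*b/a" using False by (auto simp: field_simps)
            then show ?thesis using Some Rs[of t] by auto
          next
            case None then show ?thesis using Rn False by simp
          qed
        qed
        moreover have "r + 3*b/a \<noteq> r" using b three False by simp
        ultimately show ?thesis by simp
      qed
    qed
  next
    assume "card ?R = 2"
    then obtain s1 s2 where R: "?R = {s1, s2}" "s1 \<noteq> s2" by (meson card_2_iff)
    show "\<exists>s. pt (x0,x1,x2,x3) \<in> tanp s"
    proof (cases "x3 = 0")
      case True
      then have "None \<in> ?R" by simp
      then obtain r where r: "Some r \<in> ?R" and ru: "\<And>t. Some t \<in> ?R \<Longrightarrow> t = r"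
        using R by (cases s1; cases s2) auto
      have gr: "gp x0 x1 x2 x3 r = 0" using r by simp
      show ?thesis
      proof (cases "x2 = 0")
        case True
        then show ?thesis using tan_None[OF nz] \<open>x3 = 0\<close> by blast
      next
        case False
        define r' where "r' = x1/x2 - r"
        have rr: "x2*(r'+r) = x1" using False unfolding r'_def by (simp add: field_simps)
        have "gp x0 x1 x2 x3 r' - gp x0 x1 x2 x3 r = 3*(r'-r)*(x2*(r'+r) - x1)"
          unfolding gp_def using \<open>x3 = 0\<close> by (simp add: algebra_simps power2_eq_square)
        then have "gp x0 x1 x2 x3 r' = 0" using rr gr by simp
        then have "r' = r" using ru by simp
        then have x1e: "x1 = 2*r*x2" using rr by (simp add: algebra_simps)
        have x0e: "x0 = 3*r^2*x2" using gr \<open>x3 = 0\<close> unfolding gp_def x1e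
          by (simp add: algebra_simps power2_eq_square)
        have "(x0,x1,x2,x3) = vadd (smul 0 (r^3,r^2,r,1)) (smul x2 (3*r^2,2*r,1,0))"
          using \<open>x3 = 0\<close> x0e x1e by (simp add: vs algebra_simps)
        then show ?thesis using tan_Some[OF nz] by blast
      qed
    next
      case False
      then have "None \<notin> ?R" by simp
      have m1: "s1 \<in> ?R" and m2: "s2 \<in> ?R" using R(1) by blast+
      obtain r1 where s1: "s1 = Some r1" using m1 \<open>None \<notin> ?R\<close> by (cases s1) auto
      obtain r2 where s2: "s2 = Some r2" using m2 \<open>None \<notin> ?R\<close> by (cases s2) auto
      have ne: "r1 \<noteq> r2" using R(2) s1 s2 by simp
      have g1: "gp x0 x1 x2 x3 r1 = 0" using m1 s1 by simp
      have g2: "gp x0 x1 x2 x3 r2 = 0" using m2 s2 by simp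
      have ru: "t = r1 \<or> t = r2" if "gp x0 x1 x2 x3 t = 0" for t
      proof -
        have "Some t \<in> ?R" using that by simp
        then have "Some t \<in> {s1, s2}" using R(1) by blast
        then show ?thesis using s1 s2 by auto
      qed
      define r3 where "r3 = 3*x2/x3 - r1 - r2"
      have rel: "3*x2 = x3*(r1+r2+r3)" using False unfolding r3_def by (simp add: field_simps)
      have G: "gp x0 x1 x2 x3 t = (-x3)*t^3+(x3*(r1+r2+r3))*t^2+(-3*x1)*t+x0" for t
        unfolding gp_def rel[symmetric] by simp
      have "(r1 - r2) * gp x0 x1 x2 x3 r3 = (r3 - r2) * gp x0 x1 x2 x3 r1 - (r3 - r1) * gp x0 x1 x2 x3 r2"
        unfolding G by (simp add: algebra_simps power2_eq_square power3_eq_cube)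
      then have "gp x0 x1 x2 x3 r3 = 0" using g1 g2 ne by simp
      then have "r3 = r1 \<or> r3 = r2" by (rule ru)
      then show ?thesis
      proof
        assume "r3 = r1"
        then have "3*x2 = x3*(2*r1+r2)" using rel by (simp add: algebra_simps)
        then show ?thesis using double_root[OF nz three g1 g2 ne] by blast
      next
        assume "r3 = r2"
        then have "3*x2 = x3*(2*r2+r1)" using rel by (simp add: algebra_simps)
        then show ?thesis using double_root[OF nz three g2 g1 ne[symmetric]] by blast
      qed
    qed
  qed
qed

lemma T_iff:
  fixes x :: "'a::{field,finite} v4"
  assumes "x \<noteq> zero4" "(3::'a) \<noteq> 0" "pt x \<notin> Curve"
  shows "(\<exists>s. pt x \<in> tanp s) \<longleftrightarrow> card {s. pt x \<in> oscp s} = 2"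
proof -
  obtain x0 x1 x2 x3 where x: "x = (x0,x1,x2,x3)" by (rule v4_cases)
  show ?thesis unfolding x gamma_set[OF assms(1)[unfolded x]]
    using T_iff'[OF assms(1)[unfolded x] assms(2) assms(3)[unfolded x]] unfolding gp_def .
qed

lemma countB:
  fixes u v :: "'a::{field,finite} v4"
  assumes i: "indep u v" and disj: "lineset u v \<inter> Curve = {}"
    and ng: "\<forall>\<gamma>\<in>GammaPlanes. \<not> lineset u v \<subseteq> \<gamma>" and three: "(3::'a) \<noteq> 0"
  shows "PN (muGamma_points 1) (lineset u v) + 2 * PN T_points (lineset u v)
      + 3 * PN (muGamma_points 3) (lineset u v) = card (UNIV :: 'a set) + 1"
proof -
  let ?m = "lineset u v"
  let ?g = "\<lambda>P. card {\<gamma>\<in>(GammaPlanes::'a v4 set set set). P \<in> \<gamma>}"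
  have one: "card {P\<in>?m. P \<in> \<gamma>} = 1" if g: "\<gamma> \<in> GammaPlanes" for \<gamma>
  proof -
    obtain s where s: "\<gamma> = planeset (oscv s)" using g unfolding GammaPlanes_def oscp_eq by blast
    have "\<exists>!P. P \<in> ?m \<and> P \<in> \<gamma>" unfolding s by (rule line_meets_plane[OF i]) (use ng g s in blast)
    then obtain P0 where h: "P0 \<in> ?m \<and> P0 \<in> \<gamma>" and u: "\<And>P. P \<in> ?m \<and> P \<in> \<gamma> \<Longrightarrow> P = P0" by blast
    have "{P\<in>?m. P \<in> \<gamma>} = {P0}"
    proof (rule Set.set_eqI)
      fix P show "P \<in> {P\<in>?m. P \<in> \<gamma>} \<longleftrightarrow> P \<in> {P0}" using h u[of P] by auto
    qed
    then show ?thesis by simp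
  qed
  have "(\<Sum>P\<in>?m. ?g P) = (\<Sum>\<gamma>\<in>GammaPlanes. card {P\<in>?m. P \<in> \<gamma>})" by (rule double_count) simp_all
  also have "\<dots> = (\<Sum>\<gamma>\<in>(GammaPlanes::'a v4 set set set). 1)" using one by (intro sum.cong) auto
  also have "\<dots> = card (UNIV :: 'a set) + 1" using card_Gamma by simp
  finally have S: "(\<Sum>P\<in>?m. ?g P) = card (UNIV :: 'a set) + 1" .
  have pts: "\<exists>x. x \<noteq> zero4 \<and> P = pt x \<and> P \<in> Points \<and> P \<notin> Curve" if "P \<in> ?m" for P
    using lineset_elem[OF that] disj that unfolding Points_def by blast
  have le3: "\<forall>P\<in>?m. ?g P \<le> 3"
  proof
    fix P assume "P \<in> ?m"
    then obtain x where x: "x \<noteq> zero4" "P = pt x" using pts by blast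
    show "?g P \<le> 3" unfolding card_gamma_through x(2) by (rule gamma_le3[OF x(1) three])
  qed
  have e1: "{P\<in>?m. ?g P = 1} = {P \<in> muGamma_points 1. P \<in> ?m}"
  proof (rule Set.set_eqI)
    fix P show "P \<in> {P\<in>?m. ?g P = 1} \<longleftrightarrow> P \<in> {P \<in> muGamma_points 1. P \<in> ?m}"
    proof (cases "P \<in> ?m")
      case True
      then obtain x where x: "P \<in> Points" "P \<notin> Curve" using pts by blast
      show ?thesis using x True unfolding muGamma_points_def by auto
    qed simp
  qed
  have e2: "{P\<in>?m. ?g P = 2} = {P \<in> T_points. P \<in> ?m}"
  proof (rule Set.set_eqI)
    fix P show "P \<in> {P\<in>?m. ?g P = 2} \<longleftrightarrow> P \<in> {P \<in> T_points. P \<in> ?m}"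
    proof (cases "P \<in> ?m")
      case True
      then obtain x where x: "x \<noteq> zero4" "P = pt x" "P \<in> Points" "P \<notin> Curve" using pts by blast
      show ?thesis using T_iff[OF x(1) three] x True card_gamma_through[of P] unfolding T_points_def by auto
    qed simp
  qed
  have e3: "{P\<in>?m. ?g P = 3} = {P \<in> muGamma_points 3. P \<in> ?m}"
  proof (rule Set.set_eqI)
    fix P show "P \<in> {P\<in>?m. ?g P = 3} \<longleftrightarrow> P \<in> {P \<in> muGamma_points 3. P \<in> ?m}"
    proof (cases "P \<in> ?m")
      case True
      then obtain x where x: "P \<in> Points" "P \<notin> Curve" using pts by blast
      show ?thesis using x True unfolding muGamma_points_def by auto
    qed simp
  qed
  show ?thesis using split123[OF _ le3] S e1 e2 e3 unfolding PN_def by simp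
qed


definition Jv :: "'a::field v4 \<Rightarrow> 'a v4" where
  "Jv v = (case v of (x0,x1,x2,x3) \<Rightarrow> (x3, -3*x2, 3*x1, -x0))"

lemma polarv_J: "polarv v = planeset (Jv v)"
  by (cases v rule: v4_cases) (simp add: polarv_def Jv_def)

lemma J_lin: "Jv (vadd (smul a u) (smul b v)) = vadd (smul a (Jv u)) (smul b (Jv (v::'a::field v4)))"
  by (cases u rule: v4_cases; cases v rule: v4_cases) (simp add: Jv_def vs algebra_simps)

lemma J_alt: "dot (Jv a) b = - dot (Jv b) (a::'a::field v4)"
  by (cases a rule: v4_cases; cases b rule: v4_cases) (simp add: Jv_def vs algebra_simps)

lemma J_zero: "(3::'a) \<noteq> 0 \<Longrightarrow> Jv x = zero4 \<longleftrightarrow> x = (zero4::'a::field v4)"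
  by (cases x rule: v4_cases) (auto simp: Jv_def vs)

lemma J_indep: assumes "(3::'a::field) \<noteq> 0" "indep u (v::'a v4)" shows "indep (Jv u) (Jv v)"
  unfolding indep_def
proof (intro allI impI)
  fix a b assume "vadd (smul a (Jv u)) (smul b (Jv v)) = zero4"
  then have "Jv (vadd (smul a u) (smul b v)) = zero4" by (simp add: J_lin)
  then have "vadd (smul a u) (smul b v) = zero4" using J_zero[OF assms(1)] by blast
  then show "a = 0 \<and> b = 0" using assms(2) unfolding indep_def by blast
qed

lemma oscp_J: "oscp s = planeset (Jv (cvec (s::'a::field option)))"
proof (cases s)
  case None
  have "Jv (cvec s) = smul (-1) (0,0,0,1)" using None by (simp add: Jv_def cvec_def vs)
  then show ?thesis using None planeset_smul[of "-1::'a" "(0,0,0,1)"] by (simp add: oscp_def)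
next
  case (Some t)
  then show ?thesis by (simp add: oscp_def Jv_def cvec_def)
qed

lemma lineset_alt: "lineset u v = {pt x | x. x \<noteq> zero4 \<and> x \<in> kspan u v}"
  unfolding lineset_def kspan_def by blast

lemma planes_inter: "planeset c \<inter> planeset d = {pt x | x. x \<noteq> zero4 \<and> x \<in> sol c (d::'a::field v4)}"
proof (rule Set.set_eqI)
  fix P
  show "P \<in> planeset c \<inter> planeset d \<longleftrightarrow> P \<in> {pt x | x. x \<noteq> zero4 \<and> x \<in> sol c d}"
  proof
    assume "P \<in> planeset c \<inter> planeset d"
    then obtain x where x: "x \<noteq> zero4" "P = pt x" "dot c x = 0" using planeset_elem by blast
    then have "dot d x = 0" using \<open>P \<in> planeset c \<inter> planeset d\<close> planeset_mem by blast
    then show "P \<in> {pt x | x. x \<noteq> zero4 \<and> x \<in> sol c d}" using x unfolding sol_def by blast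
  next
    assume "P \<in> {pt x | x. x \<noteq> zero4 \<and> x \<in> sol c d}"
    then obtain x where x: "x \<noteq> zero4" "P = pt x" "x \<in> sol c d" by blast
    then show "P \<in> planeset c \<inter> planeset d" using planeset_mem[OF x(1)] unfolding sol_def by auto
  qed
qed

lemma sol_kspan:
  fixes c d c' d' :: "'a::field v4"
  assumes "kspan c d = kspan c' d'"
  shows "sol c d = sol c' d'"
proof -
  have *: "x \<in> sol c d \<longleftrightarrow> (\<forall>y\<in>kspan c d. dot y x = 0)" for x c d :: "'a v4"
  proof
    assume "x \<in> sol c d"
    then show "\<forall>y\<in>kspan c d. dot y x = 0" unfolding sol_def kspan_def
      by (auto simp: dot_comm[of _ x] dot_lin)
  next
    assume "\<forall>y\<in>kspan c d. dot y x = 0"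
    then show "x \<in> sol c d" using kspan_u[of c d] kspan_v[of d c] unfolding sol_def by blast
  qed
  show ?thesis using assms * by blast
qed

lemma distinct_pts_indep:
  fixes u w :: "'a::field v4"
  assumes "u \<noteq> zero4" "w \<noteq> zero4" "pt u \<noteq> pt w"
  shows "indep u w"
  unfolding indep_def
proof (intro allI impI)
  fix a b assume e: "vadd (smul a u) (smul b w) = zero4"
  have s: "smul a u = smul (-b) w" using e
    by (cases u rule: v4_cases; cases w rule: v4_cases) (auto simp: vs add_eq_0_iff2)
  show "a = 0 \<and> b = 0"
  proof (cases "a = 0")
    case True
    then have "smul (-b) w = zero4" using s by (cases u rule: v4_cases) (simp add: vs)
    then show ?thesis using True assms(2) by (simp add: smul_zero_iff)
  next
    case False
    then have "pt u = pt w" using pt_prop[OF assms(1) assms(2) s] by blast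
    then show ?thesis using assms(3) by blast
  qed
qed

lemma indep_pts_distinct:
  fixes u v :: "'a::field v4"
  assumes i: "indep u v" shows "pt u \<noteq> pt v"
proof
  assume "pt u = pt v"
  then obtain k where "v = smul k u" using pt_eq_iff indep_nz[OF i] by metis
  then have "vadd (smul k u) (smul (-1) v) = zero4"
    by (cases u rule: v4_cases) (simp add: vs)
  then have "-(1::'a) = 0" using i unfolding indep_def by blast
  then show False by simp
qed

lemma polar_line_eq:
  fixes u v :: "'a::field v4"
  assumes three: "(3::'a) \<noteq> 0" and i: "indep u v"
  shows "polar_line (lineset u v) = {pt x | x. x \<noteq> zero4 \<and> x \<in> sol (Jv u) (Jv v)}"
  unfolding polar_line_def
proof (rule someI2_ex)
  show "\<exists>m u' w'. u' \<noteq> zero4 \<and> w' \<noteq> zero4 \<and> pt u' \<in> lineset u v \<and> pt w' \<in> lineset u v \<and>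
      pt u' \<noteq> pt w' \<and> m = polarv u' \<inter> polarv w'"
    using indep_nz[OF i] indep_pts_distinct[OF i] lineset_mem kspan_u kspan_v by blast
next
  fix m assume "\<exists>u' w'. u' \<noteq> zero4 \<and> w' \<noteq> zero4 \<and> pt u' \<in> lineset u v \<and> pt w' \<in> lineset u v \<and>
      pt u' \<noteq> pt w' \<and> m = polarv u' \<inter> polarv w'"
  then obtain u' w' where h: "u' \<noteq> zero4" "w' \<noteq> zero4" "pt u' \<in> lineset u v" "pt w' \<in> lineset u v"
      "pt u' \<noteq> pt w'" "m = polarv u' \<inter> polarv w'" by blast
  have iu: "indep u' w'" using distinct_pts_indep[OF h(1,2,5)] .
  have ku: "u' \<in> kspan u v" "w' \<in> kspan u v" using h lineset_mem by blast+
  obtain a b where ua: "u' = vadd (smul a u) (smul b v)" using ku(1) unfolding kspan_def by blast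
  obtain c d where wa: "w' = vadd (smul c u) (smul d v)" using ku(2) unfolding kspan_def by blast
  have "Jv u' \<in> kspan (Jv u) (Jv v)" "Jv w' \<in> kspan (Jv u) (Jv v)"
    unfolding ua wa J_lin kspan_def by blast+
  then have "kspan (Jv u') (Jv w') = kspan (Jv u) (Jv v)"
    using kspan_eq[OF J_indep[OF three i] J_indep[OF three iu]] by blast
  then have "sol (Jv u') (Jv w') = sol (Jv u) (Jv v)" by (rule sol_kspan)
  then show "m = {pt x | x. x \<noteq> zero4 \<and> x \<in> sol (Jv u) (Jv v)}"
    unfolding h(6) polarv_J planes_inter by simp
qed

lemma polar_facts:
  fixes u v :: "'a::{field,finite} v4"
  assumes three: "(3::'a) \<noteq> 0" and i: "indep u v" and disj: "lineset u v \<inter> Curve = {}"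
    and ng: "\<forall>\<gamma>\<in>GammaPlanes. \<not> lineset u v \<subseteq> \<gamma>"
  shows "\<exists>u1 v1. indep u1 v1 \<and> polar_line (lineset u v) = lineset u1 v1 \<and>
     polar_line (lineset u1 v1) = lineset u v \<and> lineset u1 v1 \<inter> Curve = {} \<and>
     (\<forall>\<gamma>\<in>GammaPlanes. \<not> lineset u1 v1 \<subseteq> \<gamma>)"
proof -
  obtain u1 v1 where uv1: "indep u1 v1" "sol (Jv u) (Jv v) = kspan u1 v1" using K[OF J_indep[OF three i]] by blast
  have P1: "polar_line (lineset u v) = lineset u1 v1"
    using polar_line_eq[OF three i] uv1(2) lineset_alt[of u1 v1] by simp
  have "u1 \<in> sol (Jv u) (Jv v)" "v1 \<in> sol (Jv u) (Jv v)" using uv1(2) kspan_u kspan_v by blast+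
  then have "u \<in> sol (Jv u1) (Jv v1)" "v \<in> sol (Jv u1) (Jv v1)"
    unfolding sol_def using J_alt[of u1 u] J_alt[of v1 u] J_alt[of u1 v] J_alt[of v1 v] by auto
  moreover obtain u2 v2 where uv2: "indep u2 v2" "sol (Jv u1) (Jv v1) = kspan u2 v2"
    using K[OF J_indep[OF three uv1(1)]] by blast
  ultimately have ks: "sol (Jv u1) (Jv v1) = kspan u v" using kspan_eq[OF uv2(1) i] by simp
  have P2: "polar_line (lineset u1 v1) = lineset u v"
    using polar_line_eq[OF three uv1(1)] ks lineset_alt[of u v] by simp
  have P3: "lineset u1 v1 \<inter> Curve = {}"
  proof (rule ccontr)
    assume "lineset u1 v1 \<inter> Curve \<noteq> {}"
    then obtain s where s: "pt (cvec s) \<in> lineset u1 v1" unfolding Curve_def cpt_def by blast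
    then have "cvec s \<in> sol (Jv u) (Jv v)" using lineset_mem[OF cvec_nz] uv1(2) by blast
    then have "dot (Jv (cvec s)) u = 0" "dot (Jv (cvec s)) v = 0"
      unfolding sol_def using J_alt[of u "cvec s"] J_alt[of v "cvec s"] by auto
    then have "lineset u v \<subseteq> oscp s" unfolding oscp_J using line_sub_plane[OF i] by blast
    then show False using ng unfolding GammaPlanes_def by blast
  qed
  have P4: "\<forall>\<gamma>\<in>GammaPlanes. \<not> lineset u1 v1 \<subseteq> \<gamma>"
  proof
    fix \<gamma> :: "'a v4 set set" assume "\<gamma> \<in> GammaPlanes"
    then obtain s where s: "\<gamma> = oscp s" unfolding GammaPlanes_def by blast
    show "\<not> lineset u1 v1 \<subseteq> \<gamma>"
    proof
      assume "lineset u1 v1 \<subseteq> \<gamma>"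
      then have "dot (Jv (cvec s)) u1 = 0" "dot (Jv (cvec s)) v1 = 0"
        using line_sub_plane[OF uv1(1)] unfolding s oscp_J by blast+
      then have "cvec s \<in> sol (Jv u1) (Jv v1)"
        unfolding sol_def using J_alt[of u1 "cvec s"] J_alt[of v1 "cvec s"] by auto
      then have "pt (cvec s) \<in> lineset u v" using ks lineset_mem[OF cvec_nz] by blast
      then show False using disj unfolding Curve_def cpt_def by blast
    qed
  qed
  show ?thesis using uv1(1) P1 P2 P3 P4 by blast
qed

lemma three_nz:
  assumes "card (UNIV :: 'a::{field,finite} set) mod 3 \<noteq> 0"
  shows "(3::'a) \<noteq> 0"
proof
  assume "(3::'a) = 0"
  then have "of_nat 3 = (0::'a)" by simp
  then have d: "CHAR('a) dvd 3" using of_nat_eq_0_iff_char_dvd by blast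
  have "CHAR('a) > 0" by (simp add: finite_imp_CHAR_pos)
  then have p: "prime CHAR('a)" by (rule prime_CHAR_semidom)
  have "CHAR('a) = 3"
  proof -
    have "CHAR('a) \<le> 3" using d by (simp add: dvd_imp_le)
    moreover have "CHAR('a) \<noteq> 1" "CHAR('a) \<noteq> 0" using p by auto
    moreover have "CHAR('a) \<noteq> 2" using d by auto
    ultimately show ?thesis by linarith
  qed
  then have "3 dvd card (UNIV :: 'a set)" using CHAR_dvd_CARD by metis
  then show False using assms by simp
qed

theorem lemma3p6:
  fixes emb :: "'a::{field,finite} \<Rightarrow> 'b::{field,finite}"
    and l :: "'a v4 set set"
  assumes q5: "card (UNIV :: 'a set) \<ge> 5"
    and ext: "is_field_emb emb" "card (UNIV :: 'b set) = card (UNIV :: 'a set) ^ 2"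
    and l: "l \<in> EnGammaLines emb"
  shows "PiN oneC_bar_planes l + 2 * PiN (dC_planes 2) l + 3 * PiN (dC_planes 3) l = card (UNIV :: 'a set) + 1
    \<and> (card (UNIV :: 'a set) mod 3 \<noteq> 0 \<longrightarrow>
         l = polar_line (polar_line l)
       \<and> PiN oneC_bar_planes (polar_line l) + 2 * PiN (dC_planes 2) (polar_line l)
           + 3 * PiN (dC_planes 3) (polar_line l) = card (UNIV :: 'a set) + 1
       \<and> PN (muGamma_points 1) l + 2 * PN T_points l + 3 * PN (muGamma_points 3) l = card (UNIV :: 'a set) + 1
       \<and> PN (muGamma_points 1) (polar_line l) + 2 * PN T_points (polar_line l)
           + 3 * PN (muGamma_points 3) (polar_line l) = card (UNIV :: 'a set) + 1)"
proof -
  have lL: "l \<in> Lines" "l \<inter> Curve = {}" "\<forall>\<pi>\<in>GammaPlanes. \<not> l \<subseteq> \<pi>"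
    using l unfolding EnGammaLines_def by auto
  obtain u v where uv: "indep u v" "l = lineset u v" using lL(1) unfolding Lines_def by blast
  have A: "PiN oneC_bar_planes l + 2 * PiN (dC_planes 2) l + 3 * PiN (dC_planes 3) l = card (UNIV :: 'a set) + 1"
    using countA[OF uv(1)] lL uv(2) by simp
  moreover have "card (UNIV :: 'a set) mod 3 \<noteq> 0 \<longrightarrow>
         l = polar_line (polar_line l)
       \<and> PiN oneC_bar_planes (polar_line l) + 2 * PiN (dC_planes 2) (polar_line l)
           + 3 * PiN (dC_planes 3) (polar_line l) = card (UNIV :: 'a set) + 1
       \<and> PN (muGamma_points 1) l + 2 * PN T_points l + 3 * PN (muGamma_points 3) l = card (UNIV :: 'a set) + 1
       \<and> PN (muGamma_points 1) (polar_line l) + 2 * PN T_points (polar_line l)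
           + 3 * PN (muGamma_points 3) (polar_line l) = card (UNIV :: 'a set) + 1"
  proof
    assume "card (UNIV :: 'a set) mod 3 \<noteq> 0"
    then have three: "(3::'a) \<noteq> 0" by (rule three_nz)
    have d: "lineset u v \<inter> Curve = {}" "\<forall>\<gamma>\<in>GammaPlanes. \<not> lineset u v \<subseteq> \<gamma>" using lL uv(2) by auto
    obtain u1 v1 where p: "indep u1 v1" "polar_line (lineset u v) = lineset u1 v1"
      "polar_line (lineset u1 v1) = lineset u v" "lineset u1 v1 \<inter> Curve = {}"
      "\<forall>\<gamma>\<in>GammaPlanes. \<not> lineset u1 v1 \<subseteq> \<gamma>"
      using polar_facts[OF three uv(1) d] by blast
    show "l = polar_line (polar_line l)
       \<and> PiN oneC_bar_planes (polar_line l) + 2 * PiN (dC_planes 2) (polar_line l)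
           + 3 * PiN (dC_planes 3) (polar_line l) = card (UNIV :: 'a set) + 1
       \<and> PN (muGamma_points 1) l + 2 * PN T_points l + 3 * PN (muGamma_points 3) l = card (UNIV :: 'a set) + 1
       \<and> PN (muGamma_points 1) (polar_line l) + 2 * PN T_points (polar_line l)
           + 3 * PN (muGamma_points 3) (polar_line l) = card (UNIV :: 'a set) + 1"
      unfolding uv(2) p(2) p(3)
      using countA[OF p(1) p(4) p(5)] countB[OF uv(1) d three] countB[OF p(1) p(4) p(5) three] by simp
  qed
  ultimately show ?thesis by blast
qed

end
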